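(* Let $d\ge 1$ and $q\ge 2$ be integers. (a) If $\gcd(d,q)=1$, then the Hamming graph $H(d,q)$ is $\mathbb{Z}_{q^d}$-distance antimagic. In particular, the complete graph $K_q$ is $\mathbb{Z}_q$-distance antimagic for every $q\ge 2$. (b) If both $d$ and $q$ are even, then $H(d,q)$ is not $\mathbb{Z}_{q^d}$-distance antimagic.
   Context: $H(d,q)$ is the graph with vertex set $\mathbb{Z}_q^d$ in which two $d$-tuples are adjacent iff they differ in exactly one coordinate (equivalently the Cartesian product of $d$ copies of $K_q$). $\mathbb{Z}_m$ is the cyclic group of integers modulo $m$. For a graph $G$ with $n$ vertices and an Abelian group $A$ of order $n$ (written additively), and a bijection $f:V(G)\to A$, the weight of $x$ is $w_f(x)=\sum_{y\in N(x)} f(y)$ computed in $A$ ($N(x)$ the open neighbourhood). $f$ is an $A$-distance antimagic labelling if all weights are pairwise distinct; $G$ is $A$-distance antimagic if it admits such a labelling. *)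

theory Defs
  imports "HOL-Library.FuncSet"
begin

definition hamming_vertices :: "nat \<Rightarrow> nat \<Rightarrow> (nat \<Rightarrow> nat) set" where
  "hamming_vertices d q = PiE {..<d} (\<lambda>_. {..<q})"

definition hamming_adj :: "nat \<Rightarrow> (nat \<Rightarrow> nat) \<Rightarrow> (nat \<Rightarrow> nat) \<Rightarrow> bool" where
  "hamming_adj d x y \<longleftrightarrow> card {i \<in> {..<d}. x i \<noteq> y i} = 1"

text \<open>A graph with vertex set V and adjacency relation adj is Z_m-distance antimagic
  (where Z_m is represented by {0..<m} with addition mod m): there is a bijection
  f : V -> Z_m such that the weights w(x) = sum of f over the open neighbourhood of x,
  computed mod m, are pairwise distinct.\<close>
definition Zm_distance_antimagic :: "'a set \<Rightarrow> ('a \<Rightarrow> 'a \<Rightarrow> bool) \<Rightarrow> nat \<Rightarrow> bool" where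
  "Zm_distance_antimagic V adj m \<longleftrightarrow>
     (\<exists>f. bij_betw f V {..<m} \<and>
          inj_on (\<lambda>x. (\<Sum>y\<in>{y \<in> V. adj x y}. f y) mod m) V)"

end

theory Submission imports Defs begin

lemma nbr_eq:
  assumes x: "x \<in> hamming_vertices d q"
  shows "{y \<in> hamming_vertices d q. hamming_adj d x y}
       = (\<Union>i\<in>{..<d}. (\<lambda>v. x(i:=v)) ` ({..<q} - {x i}))"
proof
  show "{y \<in> hamming_vertices d q. hamming_adj d x y} \<subseteq> (\<Union>i\<in>{..<d}. (\<lambda>v. x(i:=v)) ` ({..<q} - {x i}))"
  proof
    fix y assume "y \<in> {y \<in> hamming_vertices d q. hamming_adj d x y}"
    hence y: "y \<in> hamming_vertices d q" and c: "card {i \<in> {..<d}. x i \<noteq> y i} = 1"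
      by (auto simp: hamming_adj_def)
    from c obtain i where i: "{i \<in> {..<d}. x i \<noteq> y i} = {i}" by (auto simp: card_1_singleton_iff)
    have h: "(j < d \<and> x j \<noteq> y j) = (j = i)" for j
      using i[unfolded set_eq_iff, rule_format, of j] by simp
    hence id: "i < d" "x i \<noteq> y i" by auto
    have "y = x(i := y i)"
    proof
      fix j show "y j = (x(i := y i)) j"
      proof (cases "j < d")
        case True then show ?thesis using h[of j] by (cases "j = i") auto
      next
        case False
        then have "x j = undefined" "y j = undefined" using x y unfolding hamming_vertices_def
          by (auto intro: PiE_arb)
        then show ?thesis using False id by simp
      qed
    qed
    moreover have "y i < q" using y id unfolding hamming_vertices_def by blast
    ultimately show "y \<in> (\<Union>i\<in>{..<d}. (\<lambda>v. x(i:=v)) ` ({..<q} - {x i}))"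
      using id by (intro UN_I[of i]) auto
  qed
next
  show "(\<Union>i\<in>{..<d}. (\<lambda>v. x(i:=v)) ` ({..<q} - {x i})) \<subseteq> {y \<in> hamming_vertices d q. hamming_adj d x y}"
  proof clarify
    fix i v assume iv: "i < d" "v < q" "v \<noteq> x i"
    have "x(i:=v) \<in> hamming_vertices d q" using x iv unfolding hamming_vertices_def
      by (intro PiE_I) (auto elim: PiE_E)
    moreover have "{j \<in> {..<d}. x j \<noteq> (x(i:=v)) j} = {i}" using iv by auto
    ultimately show "x(i:=v) \<in> hamming_vertices d q \<and> hamming_adj d x (x(i:=v))"
      by (simp add: hamming_adj_def)
  qed
qed
lemma nbr_sum:
  assumes x: "x \<in> hamming_vertices d q"
  shows "(\<Sum>y\<in>{y \<in> hamming_vertices d q. hamming_adj d x y}. g y)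
       = (\<Sum>i<d. \<Sum>v\<in>{..<q} - {x i}. g (x(i:=v)))"
proof -
  have "(\<Sum>y\<in>{y \<in> hamming_vertices d q. hamming_adj d x y}. g y)
      = (\<Sum>i<d. \<Sum>y\<in>(\<lambda>v. x(i:=v)) ` ({..<q} - {x i}). g y)"
    unfolding nbr_eq[OF x]
  proof (rule sum.UNION_disjoint)
    show "\<forall>i\<in>{..<d}. \<forall>j\<in>{..<d}. i \<noteq> j \<longrightarrow>
      (\<lambda>v. x(i:=v)) ` ({..<q} - {x i}) \<inter> (\<lambda>v. x(j:=v)) ` ({..<q} - {x j}) = {}"
    proof (intro ballI impI)
      fix i j :: nat assume "i \<noteq> j"
      show "(\<lambda>v. x(i:=v)) ` ({..<q} - {x i}) \<inter> (\<lambda>v. x(j:=v)) ` ({..<q} - {x j}) = {}"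
      proof (rule ccontr)
        assume "(\<lambda>v. x(i:=v)) ` ({..<q} - {x i}) \<inter> (\<lambda>v. x(j:=v)) ` ({..<q} - {x j}) \<noteq> {}"
        then obtain v w where vw: "v \<noteq> x i" "x(i:=v) = x(j:=w)" by blast
        then have "(x(i:=v)) i = (x(j:=w)) i" by simp
        then show False using vw(1) \<open>i \<noteq> j\<close> by simp
      qed
    qed
  qed auto
  also have "\<dots> = (\<Sum>i<d. \<Sum>v\<in>{..<q} - {x i}. g (x(i:=v)))"
  proof (intro sum.cong refl)
    fix i assume "i \<in> {..<d}"
    have "inj_on (\<lambda>v. x(i:=v)) ({..<q} - {x i})"
    proof (rule inj_onI)
      fix v w assume "x(i:=v) = x(i:=w)"
      then have "(x(i:=v)) i = (x(i:=w)) i" by simp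
      then show "v = w" by simp
    qed
    then show "(\<Sum>y\<in>(\<lambda>v. x(i:=v)) ` ({..<q} - {x i}). g y) = (\<Sum>v\<in>{..<q} - {x i}. g (x(i:=v)))"
      by (simp add: sum.reindex)
  qed
  finally show ?thesis .
qed

lemma adj_sym: "hamming_adj d x y = hamming_adj d y x"
proof -
  have "{i \<in> {..<d}. x i \<noteq> y i} = {i \<in> {..<d}. y i \<noteq> x i}" by auto
  then show ?thesis unfolding hamming_adj_def by simp
qed

lemma degree:
  assumes x: "x \<in> hamming_vertices d q"
  shows "card {y \<in> hamming_vertices d q. hamming_adj d x y} = d * (q - 1)"
proof -
  have "card {y \<in> hamming_vertices d q. hamming_adj d x y} = (\<Sum>y\<in>{y \<in> hamming_vertices d q. hamming_adj d x y}. 1)"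
    by simp
  also have "\<dots> = (\<Sum>i<d. \<Sum>v\<in>{..<q} - {x i}. 1)" by (rule nbr_sum[OF x])
  also have "\<dots> = (\<Sum>i<d. q - 1)"
  proof (intro sum.cong refl)
    fix i assume "i \<in> {..<d}"
    then have "x i \<in> {..<q}" using x unfolding hamming_vertices_def by blast
    then show "(\<Sum>v\<in>{..<q} - {x i}. 1) = q - 1" by (simp add: card_Diff_singleton)
  qed
  finally show ?thesis by simp
qed


definition enc :: "nat \<Rightarrow> nat \<Rightarrow> (nat \<Rightarrow> nat) \<Rightarrow> nat" where
  "enc d q x = (\<Sum>j<d. x j * q ^ j)"

lemma enc_lt: "(\<forall>j<d. x j < q) \<Longrightarrow> enc d q x < q ^ d"
proof (induction d)
  case 0 then show ?case by (simp add: enc_def)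
next
  case (Suc d)
  have a: "enc d q x < q ^ d" using Suc by auto
  have b: "x d + 1 \<le> q" using Suc.prems by auto
  have "enc (Suc d) q x = enc d q x + x d * q ^ d" by (simp add: enc_def)
  also have "\<dots> < q ^ d + x d * q ^ d" using a by simp
  also have "\<dots> = (x d + 1) * q ^ d" by simp
  also have "\<dots> \<le> q * q ^ d" using b by (rule mult_le_mono1)
  finally show ?case by simp
qed

lemma enc_inj: "(\<forall>j<d. x j < q \<and> y j < q) \<Longrightarrow> enc d q x = enc d q y \<Longrightarrow> \<forall>j<d. x j = y j"
proof (induction d)
  case 0 then show ?case by simp
next
  case (Suc d)
  have A: "enc d q x < q ^ d" "enc d q y < q ^ d" using Suc.prems by (auto intro!: enc_lt)
  have e: "enc d q x + x d * q ^ d = enc d q y + y d * q ^ d" using Suc.prems by (simp add: enc_def)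
  have qp: "q ^ d > 0" using A(1) by linarith
  have "(enc d q x + x d * q ^ d) mod q ^ d = enc d q x" using A by simp
  moreover have "(enc d q y + y d * q ^ d) mod q ^ d = enc d q y" using A by simp
  ultimately have 1: "enc d q x = enc d q y" using e by simp
  have "(enc d q x + x d * q ^ d) div q ^ d = x d" using A qp by simp
  moreover have "(enc d q y + y d * q ^ d) div q ^ d = y d" using A qp by simp
  ultimately have 2: "x d = y d" using e by simp
  show ?case using Suc.IH[OF _ 1] Suc.prems 2 by (auto simp: less_Suc_eq)
qed

lemma enc_bij: "bij_betw (enc d q) (hamming_vertices d q) {..<q ^ d}"
proof -
  have inj: "inj_on (enc d q) (hamming_vertices d q)"
  proof (rule inj_onI)
    fix x y assume x: "x \<in> hamming_vertices d q" and y: "y \<in> hamming_vertices d q" and "enc d q x = enc d q y"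
    then have "\<forall>j<d. x j = y j" by (intro enc_inj) (auto simp: hamming_vertices_def)
    then show "x = y" using x y unfolding hamming_vertices_def by (intro PiE_ext) auto
  qed
  have sub: "enc d q ` hamming_vertices d q \<subseteq> {..<q ^ d}"
    by (auto simp: hamming_vertices_def intro!: enc_lt)
  have "card (enc d q ` hamming_vertices d q) = q ^ d"
    using inj by (simp add: card_image hamming_vertices_def card_PiE)
  then have "enc d q ` hamming_vertices d q = {..<q ^ d}"
    using sub by (intro card_subset_eq) auto
  then show ?thesis using inj by (simp add: bij_betw_def)
qed

lemma enc_upd:
  assumes "i < d"
  shows "enc d q (x(i:=v)) + x i * q ^ i = enc d q x + v * q ^ i"
proof -
  have r: "enc d q y = (\<Sum>j\<in>{..<d} - {i}. y j * q ^ j) + y i * q ^ i" for y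
    unfolding enc_def using assms by (subst sum.remove[of _ i]) auto
  have "(\<Sum>j\<in>{..<d} - {i}. (x(i:=v)) j * q ^ j) = (\<Sum>j\<in>{..<d} - {i}. x j * q ^ j)"
    by (intro sum.cong) auto
  then show ?thesis using r[of x] r[of "x(i:=v)"] by simp
qed

lemma weight_formula:
  assumes x: "x \<in> hamming_vertices d q"
  shows "int (\<Sum>y\<in>{y \<in> hamming_vertices d q. hamming_adj d x y}. enc d q y)
     = (int d * (int q - 1) - int q) * int (enc d q x) + (\<Sum>v<q. int v) * (\<Sum>i<d. int q ^ i)"
proof -
  define E where "E = int (enc d q x)"
  define T where "T = (\<Sum>v<q. int v)"
  define Q where "Q = int q"
  have xi: "x i < q" if "i < d" for i using x that by (auto simp: hamming_vertices_def)
  have E: "E = (\<Sum>i<d. int (x i) * Q ^ i)" unfolding E_def enc_def Q_def by simp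
  have inner: "(\<Sum>v\<in>{..<q} - {x i}. int (enc d q (x(i:=v)))) = (Q - 1) * E + (T - Q * int (x i)) * Q ^ i"
    if i: "i < d" for i
  proof -
    have u: "int (enc d q (x(i:=v))) = E + (int v - int (x i)) * Q ^ i" for v
      using enc_upd[OF i, where x=x and v=v] unfolding E_def Q_def by (simp add: algebra_simps) (metis of_nat_add of_nat_mult of_nat_power add_diff_cancel_right' )
    have c: "card ({..<q} - {x i}) = q - 1" using xi[OF i] by (simp add: card_Diff_singleton)
    have t: "T = int (x i) + (\<Sum>v\<in>{..<q} - {x i}. int v)" unfolding T_def using xi[OF i]
      by (subst sum.remove[of _ "x i"]) auto
    have q1: "int (q - 1) = Q - 1" unfolding Q_def using xi[OF i] by simp
    have "(\<Sum>v\<in>{..<q} - {x i}. int (enc d q (x(i:=v)))) = (\<Sum>v\<in>{..<q} - {x i}. E + (int v - int (x i)) * Q ^ i)"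
      by (simp add: u)
    also have "\<dots> = int (q - 1) * E + ((\<Sum>v\<in>{..<q} - {x i}. int v) - int (q - 1) * int (x i)) * Q ^ i"
      using sum_distrib_right[of int "{..<q} - {x i}" "Q ^ i"] by (simp add: sum.distrib sum_subtractf sum_distrib_right c algebra_simps)
    also have "\<dots> = (Q - 1) * E + (T - Q * int (x i)) * Q ^ i"
      unfolding q1 t by (simp add: algebra_simps)
    finally show ?thesis .
  qed
  have "int (\<Sum>y\<in>{y \<in> hamming_vertices d q. hamming_adj d x y}. enc d q y)
      = (\<Sum>i<d. \<Sum>v\<in>{..<q} - {x i}. int (enc d q (x(i:=v))))"
    by (simp add: nbr_sum[OF x] of_nat_sum)
  also have "\<dots> = (\<Sum>i<d. (Q - 1) * E + (T - Q * int (x i)) * Q ^ i)"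
    by (intro sum.cong refl inner) auto
  also have "\<dots> = int d * (Q - 1) * E + T * (\<Sum>i<d. Q ^ i) - Q * (\<Sum>i<d. int (x i) * Q ^ i)"
    by (simp add: sum.distrib sum_subtractf sum_distrib_left sum_distrib_right algebra_simps)
  also have "\<dots> = (int d * (Q - 1) - Q) * E + T * (\<Sum>i<d. Q ^ i)"
    unfolding E[symmetric] by (simp add: algebra_simps)
  finally show ?thesis unfolding E_def T_def Q_def .
qed

lemma partA:
  assumes "coprime d q" "q \<ge> 2"
  shows "Zm_distance_antimagic (hamming_vertices d q) (hamming_adj d) (q ^ d)"
proof -
  define V where "V = hamming_vertices d q"
  define a where "a = int d * (int q - 1) - int q"
  define C where "C = (\<Sum>v<q. int v) * (\<Sum>i<d. int q ^ i)"
  define N where "N = q ^ d"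
  have cop: "coprime a (int N)"
  proof -
    have ae: "a = (int d - 1) * int q + (- int d)" unfolding a_def by (simp add: algebra_simps)
    have "coprime (int d) (int q)" using assms by simp
    then have g1: "gcd (int q) (int d) = 1" by (simp add: coprime_iff_gcd_eq_1 gcd.commute)
    have "gcd (int q) a = gcd (int q) (- int d)" unfolding ae by (rule gcd_add_mult)
    then have "gcd (int q) a = 1" using g1 by simp
    then have "coprime a (int q)" by (simp add: coprime_iff_gcd_eq_1 gcd.commute)
    then show ?thesis unfolding N_def by simp
  qed
  have W: "int (\<Sum>y\<in>{y \<in> V. hamming_adj d x y}. enc d q y) = a * int (enc d q x) + C" if "x \<in> V" for x
    using weight_formula[of x d q] that unfolding V_def a_def C_def by simp
  have inj: "inj_on (\<lambda>x. (\<Sum>y\<in>{y \<in> V. hamming_adj d x y}. enc d q y) mod N) V"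
  proof (rule inj_onI)
    fix x x' assume x: "x \<in> V" and x': "x' \<in> V"
      and e: "(\<Sum>y\<in>{y \<in> V. hamming_adj d x y}. enc d q y) mod N = (\<Sum>y\<in>{y \<in> V. hamming_adj d x' y}. enc d q y) mod N"
    have "int ((\<Sum>y\<in>{y \<in> V. hamming_adj d x y}. enc d q y) mod N) = int ((\<Sum>y\<in>{y \<in> V. hamming_adj d x' y}. enc d q y) mod N)"
      using e by simp
    then have "(a * int (enc d q x) + C) mod int N = (a * int (enc d q x') + C) mod int N"
      unfolding of_nat_mod W[OF x] W[OF x'] .
    then have "int N dvd (a * int (enc d q x) + C) - (a * int (enc d q x') + C)"
      by (simp add: mod_eq_dvd_iff)
    then have "int N dvd a * (int (enc d q x) - int (enc d q x'))" by (simp add: algebra_simps)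
    then have dv: "int N dvd (int (enc d q x) - int (enc d q x'))"
      using cop by (simp add: coprime_dvd_mult_right_iff coprime_commute)
    have lt: "enc d q x < N" "enc d q x' < N" using enc_bij[of d q] x x' unfolding V_def N_def
      by (auto simp: bij_betw_def)
    have "int (enc d q x) - int (enc d q x') = 0"
    proof (rule ccontr)
      assume ne: "int (enc d q x) - int (enc d q x') \<noteq> 0"
      from dvd_imp_le_int[OF ne dv] lt show False by simp
    qed
    then have "enc d q x = enc d q x'" by simp
    then show "x = x'" using enc_bij[of d q] x x' unfolding V_def by (auto simp: bij_betw_def inj_on_def)
  qed
  show ?thesis unfolding Zm_distance_antimagic_def
    using enc_bij[of d q] inj unfolding V_def N_def by blast
qed

lemma partK:
  assumes "q \<ge> 2"
  shows "Zm_distance_antimagic {..<q} (\<lambda>x y. x \<noteq> y) q"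
proof -
  define T where "T = (\<Sum>v<q. v)"
  have W: "int (\<Sum>y\<in>{y \<in> {..<q}. x \<noteq> y}. y) = int T - int x" if "x < q" for x
  proof -
    have "{y \<in> {..<q}. x \<noteq> y} = {..<q} - {x}" by auto
    then show ?thesis unfolding T_def using that
      by (simp add: sum.remove[of "{..<q}" x] of_nat_sum)
  qed
  have "inj_on (\<lambda>x. (\<Sum>y\<in>{y \<in> {..<q}. x \<noteq> y}. id y) mod q) {..<q}"
  proof (rule inj_onI)
    fix x x' assume x: "x \<in> {..<q}" and x': "x' \<in> {..<q}"
      and e: "(\<Sum>y\<in>{y \<in> {..<q}. x \<noteq> y}. id y) mod q = (\<Sum>y\<in>{y \<in> {..<q}. x' \<noteq> y}. id y) mod q"
    have "int ((\<Sum>y\<in>{y \<in> {..<q}. x \<noteq> y}. y) mod q) = int ((\<Sum>y\<in>{y \<in> {..<q}. x' \<noteq> y}. y) mod q)"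
      using e by simp
    then have "(int T - int x) mod int q = (int T - int x') mod int q"
      unfolding of_nat_mod W[OF x[simplified]] W[OF x'[simplified]] .
    then have "int q dvd (int T - int x) - (int T - int x')" by (simp add: mod_eq_dvd_iff)
    then have dv: "int q dvd (int x' - int x)" by simp
    show "x = x'"
    proof (rule ccontr)
      assume "x \<noteq> x'"
      then have ne: "int x' - int x \<noteq> 0" by simp
      from dvd_imp_le_int[OF ne dv] x x' show False by simp
    qed
  qed
  then show ?thesis unfolding Zm_distance_antimagic_def
    by (intro exI[of _ id]) simp
qed

lemma gauss2: "2 * (\<Sum>k<n. k) = n * (n - 1::nat)"
proof (induction n)
  case 0 then show ?case by simp
next
  case (Suc n)
  have "2 * (\<Sum>k<Suc n. k) = n * (n - 1) + 2 * n" using Suc by simp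
  also have "\<dots> = Suc n * n" by (cases n) (auto simp: algebra_simps)
  finally show ?case by simp
qed

lemma partB:
  assumes "even d" "even q" "d \<ge> 1" "q \<ge> 2"
  shows "\<not> Zm_distance_antimagic (hamming_vertices d q) (hamming_adj d) (q ^ d)"
proof
  assume "Zm_distance_antimagic (hamming_vertices d q) (hamming_adj d) (q ^ d)"
  then obtain f where f: "bij_betw f (hamming_vertices d q) {..<q ^ d}"
    and inj: "inj_on (\<lambda>x. (\<Sum>y\<in>{y \<in> hamming_vertices d q. hamming_adj d x y}. f y) mod q ^ d) (hamming_vertices d q)"
    unfolding Zm_distance_antimagic_def by blast
  define V where "V = hamming_vertices d q"
  define N where "N = q ^ d"
  define W where "W x = (\<Sum>y\<in>{y \<in> V. hamming_adj d x y}. f y)" for x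
  define S where "S = (\<Sum>k<N. k)"
  define D where "D = d * (q - 1)"
  have fin: "finite V" unfolding V_def hamming_vertices_def by (simp add: finite_PiE)
  have cardV: "card V = N" unfolding V_def N_def hamming_vertices_def by (simp add: card_PiE)
  have inj': "inj_on (\<lambda>x. W x mod N) V" using inj unfolding W_def V_def N_def .
  have Npos: "N > 0" unfolding N_def using assms by simp
  have img: "(\<lambda>x. W x mod N) ` V = {..<N}"
  proof (rule card_subset_eq)
    show "(\<lambda>x. W x mod N) ` V \<subseteq> {..<N}" using Npos by auto
    show "card ((\<lambda>x. W x mod N) ` V) = card {..<N}" using inj' cardV by (simp add: card_image)
  qed simp
  have s1: "(\<Sum>x\<in>V. W x mod N) = S"
    unfolding S_def img[symmetric] using inj' by (simp add: sum.reindex)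
  have sf: "(\<Sum>y\<in>V. f y) = S"
    unfolding S_def using sum.reindex_bij_betw[OF f, of "\<lambda>x. x"] unfolding V_def N_def by simp
  have "(\<Sum>x\<in>V. W x) = (\<Sum>x\<in>V. \<Sum>y\<in>V. if hamming_adj d x y then f y else 0)"
    unfolding W_def using fin by (simp add: sum.inter_filter)
  also have "\<dots> = (\<Sum>y\<in>V. \<Sum>x\<in>V. if hamming_adj d x y then f y else 0)"
    by (rule sum.swap)
  also have "\<dots> = (\<Sum>y\<in>V. f y * card {x \<in> V. hamming_adj d y x})"
  proof (intro sum.cong refl)
    fix y assume "y \<in> V"
    have st: "{x \<in> V. hamming_adj d y x} = {x \<in> V. hamming_adj d x y}" using adj_sym by blast
    have "(\<Sum>x\<in>V. if hamming_adj d x y then f y else 0) = (\<Sum>x\<in>{x \<in> V. hamming_adj d x y}. f y)"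
      by (simp only: sum.inter_filter[OF fin])
    also have "\<dots> = f y * card {x \<in> V. hamming_adj d x y}" by simp
    finally show "(\<Sum>x\<in>V. if hamming_adj d x y then f y else 0) = f y * card {x \<in> V. hamming_adj d y x}"
      unfolding st .
  qed
  also have "\<dots> = (\<Sum>y\<in>V. f y * D)"
    unfolding D_def V_def by (intro sum.cong refl) (simp add: degree)
  also have "\<dots> = D * S" using sf by (simp add: sum_distrib_right[symmetric])
  finally have sw: "(\<Sum>x\<in>V. W x) = D * S" .
  have "(\<Sum>x\<in>V. W x) mod N = (\<Sum>x\<in>V. W x mod N) mod N" by (simp add: mod_sum_eq)
  then have key: "(D * S) mod N = S mod N" using sw s1 by simp
  obtain E where E: "D = 2 * E" using assms unfolding D_def by auto
  have "even N" unfolding N_def using assms by simp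
  then obtain M where M: "N = 2 * M" by auto
  then obtain M' where M': "M = Suc M'" using Npos by (cases M) auto
  have "2 * S = N * (N - 1)" unfolding S_def by (rule gauss2)
  then have Sv: "S = M + N * M'" using M M' by (simp add: algebra_simps)
  have "D * S = N * (E * (2 * M' + 1))" using E Sv M M' by (simp add: algebra_simps)
  then have "(D * S) mod N = 0" by simp
  moreover have "S mod N = M"
  proof -
    have "S mod N = (M + N * M') mod N" using Sv by simp
    also have "\<dots> = M mod N" by simp
    also have "\<dots> = M" using M M' by simp
    finally show ?thesis .
  qed
  ultimately show False using key M' by simp
qed

theorem mainTheorem3:
  fixes d q :: nat
  assumes "d \<ge> 1" and "q \<ge> 2"
  shows "(coprime d q \<longrightarrow>
            Zm_distance_antimagic (hamming_vertices d q) (hamming_adj d) (q ^ d))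
       \<and> Zm_distance_antimagic {..<q} (\<lambda>x y. x \<noteq> y) q
       \<and> (even d \<and> even q \<longrightarrow>
            \<not> Zm_distance_antimagic (hamming_vertices d q) (hamming_adj d) (q ^ d))"
  using partA partK partB assms by blast

end
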